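(* Let $n\ge1$, let $\gamma,\beta$ be proper $3$-colorings of the $2\times n$ grid graph $M^*_{2,n}$, and for an even integer $H$ set $y_{i,j}(H)=H+h_{\gamma,v_{1,1}}(\beta,v_{i,j})$ ($i\in\{1,2\}$, $1\le j\le n$). If $H$ is an even integer minimizing $S(H)=\sum_{v\in V(M^*_{2,n})}|H+h_{\gamma,v_{1,1}}(\beta,v)|=\sum_{i=1}^2\sum_{j=1}^n|y_{i,j}(H)|$ over even integers, then at least one of the two median values of the multiset $Y=\{y_{i,j}(H)\}$ (its $n$-th and $(n+1)$-th smallest elements) equals $0$.
   Context: $M^*_{2,n}$ is the grid graph with vertices $v_{i,j}$ ($i\in\{1,2\}$, $1\le j\le n$), $v_{i,j}$ adjacent to $v_{i,j\pm1}$ and $v_{3-i,j}$. Colors lie in $\mathbb{Z}_3$. For a proper $3$-coloring $\gamma$ and an edge traversed from $a$ to $b$, its weight $w(\gamma,\overrightarrow{ab})\in\{1,-1\}$ is congruent to $\gamma(b)-\gamma(a)$ mod $3$; the weight $w(\gamma,P)$ of a directed path is the sum of its edge weights. For any proper $3$-coloring the weight of a directed path from $u$ to $v$ depends only on $u,v$. The relative height is $h_{\gamma,u}(\beta,v)=w(\beta,P_{u,v})-w(\gamma,P_{u,v})$ for any directed path $P_{u,v}$ from $u$ to $v$ (always an even integer). *)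

theory Defs
  imports Main "HOL-Library.Multiset" "HOL-Library.Numeral_Type"
begin

definition grid_V :: "nat \<Rightarrow> (nat \<times> nat) set" where
  "grid_V n = {1,2} \<times> {1..n}"

definition grid_adj :: "nat \<Rightarrow> nat \<times> nat \<Rightarrow> nat \<times> nat \<Rightarrow> bool" where
  "grid_adj n a b \<longleftrightarrow> a \<in> grid_V n \<and> b \<in> grid_V n \<and>
     ((fst a = fst b \<and> (snd b = snd a + 1 \<or> snd a = snd b + 1)) \<or>
      (snd a = snd b \<and> fst a + fst b = 3))"

definition proper3 :: "nat \<Rightarrow> (nat \<times> nat \<Rightarrow> 3) \<Rightarrow> bool" where
  "proper3 n \<gamma> \<longleftrightarrow> (\<forall>a b. grid_adj n a b \<longrightarrow> \<gamma> a \<noteq> \<gamma> b)"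

text \<open>Weight of the edge traversed from a to b: the element of {1,-1} congruent to
  gamma(b) - gamma(a) mod 3.\<close>
definition edge_w :: "(nat \<times> nat \<Rightarrow> 3) \<Rightarrow> nat \<times> nat \<Rightarrow> nat \<times> nat \<Rightarrow> int" where
  "edge_w \<gamma> a b = (if \<gamma> b - \<gamma> a = 1 then 1 else -1)"

fun path_w :: "(nat \<times> nat \<Rightarrow> 3) \<Rightarrow> (nat \<times> nat) list \<Rightarrow> int" where
  "path_w \<gamma> (a # b # rest) = edge_w \<gamma> a b + path_w \<gamma> (b # rest)"
| "path_w \<gamma> _ = 0"

definition is_dpath :: "nat \<Rightarrow> (nat \<times> nat) list \<Rightarrow> nat \<times> nat \<Rightarrow> nat \<times> nat \<Rightarrow> bool" where
  "is_dpath n P u v \<longleftrightarrow> P \<noteq> [] \<and> hd P = u \<and> last P = v \<and> distinct P \<and>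
     set P \<subseteq> grid_V n \<and> (\<forall>k. Suc k < length P \<longrightarrow> grid_adj n (P ! k) (P ! Suc k))"

text \<open>Relative height h_{gamma,u}(beta,v) = w(beta,P) - w(gamma,P) for a directed path P
  from u to v (independent of the choice of P).\<close>
definition rel_height ::
  "nat \<Rightarrow> (nat \<times> nat \<Rightarrow> 3) \<Rightarrow> nat \<times> nat \<Rightarrow> (nat \<times> nat \<Rightarrow> 3) \<Rightarrow> nat \<times> nat \<Rightarrow> int" where
  "rel_height n \<gamma> u \<beta> v =
     (SOME d. \<exists>P. is_dpath n P u v \<and> d = path_w \<beta> P - path_w \<gamma> P)"

end

theory Submission
  imports Defs
begin

lemma ex3: "(x::3) = 0 \<or> x = 1 \<or> x = 2"
proof (induct x)
  case (of_int z)
  then have "z = 0 \<or> z = 1 \<or> z = 2" by auto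
  then show ?case by auto
qed

lemma ew_anti: "\<gamma> a \<noteq> \<gamma> b \<Longrightarrow> edge_w \<gamma> b a = - edge_w \<gamma> a b"
  using ex3[of "\<gamma> a"] ex3[of "\<gamma> b"] by (auto simp: edge_w_def)

lemma ew_cyc: "\<gamma> p1 \<noteq> \<gamma> p2 \<Longrightarrow> \<gamma> p1 \<noteq> \<gamma> p3 \<Longrightarrow> \<gamma> p2 \<noteq> \<gamma> p4 \<Longrightarrow> \<gamma> p3 \<noteq> \<gamma> p4
  \<Longrightarrow> edge_w \<gamma> p3 p4 = edge_w \<gamma> p1 p2 + edge_w \<gamma> p2 p4 - edge_w \<gamma> p1 p3"
  using ex3[of "\<gamma> p1"] ex3[of "\<gamma> p2"] ex3[of "\<gamma> p3"] ex3[of "\<gamma> p4"] by (auto simp: edge_w_def)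

definition phi :: "(nat \<times> nat \<Rightarrow> 3) \<Rightarrow> nat \<times> nat \<Rightarrow> int" where
  "phi \<gamma> v = (\<Sum>k\<in>{1..<snd v}. edge_w \<gamma> (1,k) (1,Suc k))
     + (if fst v = 2 then edge_w \<gamma> (1, snd v) (2, snd v) else 0)"

lemma adj_sym: "grid_adj n a b \<Longrightarrow> grid_adj n b a"
  unfolding grid_adj_def by auto

lemma edge_phi_right:
  assumes p: "proper3 n \<gamma>" and i: "i \<in> {1,2}" and j: "1 \<le> j" "Suc j \<le> n"
  shows "edge_w \<gamma> (i,j) (i,Suc j) = phi \<gamma> (i,Suc j) - phi \<gamma> (i,j)"
proof -
  have s: "(\<Sum>k\<in>{1..<Suc j}. edge_w \<gamma> (1,k) (1,Suc k)) =
      (\<Sum>k\<in>{1..<j}. edge_w \<gamma> (1,k) (1,Suc k)) + edge_w \<gamma> (1,j) (1,Suc j)"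
    using j by (simp add: sum.atLeastLessThan_Suc)
  have adj: "\<And>a b. grid_adj n a b \<Longrightarrow> \<gamma> a \<noteq> \<gamma> b" using p unfolding proper3_def by blast
  have V: "\<And>i' j'. i' \<in> {1,2} \<Longrightarrow> 1 \<le> j' \<Longrightarrow> j' \<le> n \<Longrightarrow> (i',j') \<in> grid_V n"
    unfolding grid_V_def by auto
  have a1: "\<gamma> (1,j) \<noteq> \<gamma> (1,Suc j)" by (rule adj) (use j V in \<open>auto simp: grid_adj_def\<close>)
  have a2: "\<gamma> (1,j) \<noteq> \<gamma> (2,j)" by (rule adj) (use j V in \<open>auto simp: grid_adj_def\<close>)
  have a3: "\<gamma> (1,Suc j) \<noteq> \<gamma> (2,Suc j)" by (rule adj) (use j V in \<open>auto simp: grid_adj_def\<close>)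
  have a4: "\<gamma> (2,j) \<noteq> \<gamma> (2,Suc j)" by (rule adj) (use j V in \<open>auto simp: grid_adj_def\<close>)
  show ?thesis
  proof (cases "i = 2")
    case True
    then show ?thesis using ew_cyc[OF a1 a2 a3 a4] s by (simp add: phi_def)
  next
    case False
    then have "i = 1" using i by auto
    then show ?thesis using s by (simp add: phi_def)
  qed
qed

lemma edge_phi:
  assumes p: "proper3 n \<gamma>" and a: "grid_adj n a b"
  shows "edge_w \<gamma> a b = phi \<gamma> b - phi \<gamma> a"
proof -
  obtain i j i' j' where ab: "a = (i,j)" "b = (i',j')" by (cases a, cases b) auto
  have ne: "\<gamma> a \<noteq> \<gamma> b" using p a unfolding proper3_def by blast
  have gv: "i \<in> {1,2}" "1 \<le> j" "j \<le> n" "i' \<in> {1,2}" "1 \<le> j'" "j' \<le> n"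
    using a ab unfolding grid_adj_def grid_V_def by auto
  consider "i = i'" "j' = Suc j" | "i = i'" "j = Suc j'" | "j = j'" "i + i' = 3"
    using a ab unfolding grid_adj_def by auto
  then show ?thesis
  proof cases
    case 1 then show ?thesis using edge_phi_right[OF p, of i j] gv ab by auto
  next
    case 2
    then have "edge_w \<gamma> b a = phi \<gamma> a - phi \<gamma> b"
      using edge_phi_right[OF p, of i j'] gv ab by auto
    then show ?thesis using ew_anti[OF ne] by simp
  next
    case 3
    then have "(i = 1 \<and> i' = 2) \<or> (i = 2 \<and> i' = 1)" using gv by auto
    then show ?thesis
    proof
      assume "i = 1 \<and> i' = 2" then show ?thesis using 3 ab by (simp add: phi_def)
    next
      assume h: "i = 2 \<and> i' = 1"
      then have "edge_w \<gamma> b a = phi \<gamma> a - phi \<gamma> b" using 3 ab by (simp add: phi_def)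
      then show ?thesis using ew_anti[OF ne] by simp
    qed
  qed
qed

lemma path_phi:
  assumes p: "proper3 n \<gamma>"
  shows "P \<noteq> [] \<Longrightarrow> (\<forall>k. Suc k < length P \<longrightarrow> grid_adj n (P ! k) (P ! Suc k))
     \<Longrightarrow> path_w \<gamma> P = phi \<gamma> (last P) - phi \<gamma> (hd P)"
proof (induction P rule: induct_list012)
  case (3 a b rest)
  have h: "\<forall>k. Suc k < length (b # rest) \<longrightarrow> grid_adj n ((b#rest) ! k) ((b#rest) ! Suc k)"
    using "3.prems"(2) by (metis Suc_less_eq length_Cons nth_Cons_Suc)
  have ab: "grid_adj n a b" using "3.prems"(2) by (metis length_Cons nth_Cons_0 nth_Cons_Suc zero_less_Suc Suc_less_eq)
  have "path_w \<gamma> (b # rest) = phi \<gamma> (last (b#rest)) - phi \<gamma> b" using "3.IH"(2) h by simp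
  then show ?case using edge_phi[OF p ab] by simp
qed auto


lemma dpath_snoc:
  assumes "is_dpath n P u w" "grid_adj n w x" "x \<notin> set P"
  shows "is_dpath n (P @ [x]) u x"
  unfolding is_dpath_def
proof (intro conjI allI impI)
  show "P @ [x] \<noteq> []" by simp
  show "hd (P @ [x]) = u" using assms(1) unfolding is_dpath_def by simp
  show "last (P @ [x]) = x" by simp
  show "distinct (P @ [x])" using assms(1,3) unfolding is_dpath_def by simp
  show "set (P @ [x]) \<subseteq> grid_V n" using assms(1,2) unfolding is_dpath_def grid_adj_def by simp
  fix k assume k: "Suc k < length (P @ [x])"
  show "grid_adj n ((P @ [x]) ! k) ((P @ [x]) ! Suc k)"
  proof (cases "Suc k < length P")
    case True
    then show ?thesis using assms(1) unfolding is_dpath_def by (simp add: nth_append)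
  next
    case False
    then have e: "Suc k = length P" using k by simp
    have ne: "P \<noteq> []" using assms(1) unfolding is_dpath_def by simp
    have "(P @ [x]) ! k = P ! k" using e by (simp add: nth_append)
    also have "\<dots> = last P" using e ne by (simp add: last_conv_nth flip: e)
    finally have "(P @ [x]) ! k = last P" .
    moreover have "(P @ [x]) ! Suc k = x" using e by (simp add: nth_append)
    ultimately show ?thesis using assms(1,2) unfolding is_dpath_def by simp
  qed
qed

lemma row_path: "1 \<le> j \<Longrightarrow> j \<le> n \<Longrightarrow> is_dpath n (map (\<lambda>k. (1::nat,k)) [1..<Suc j]) (1,1) (1,j)"
proof (induction j rule: dec_induct)
  case base
  then show ?case by (simp add: is_dpath_def grid_V_def)
next
  case (step m)
  have "is_dpath n (map (\<lambda>k. (1::nat,k)) [1..<Suc m] @ [(1, Suc m)]) (1,1) (1,Suc m)"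
    by (rule dpath_snoc) (use step in \<open>auto simp: grid_adj_def grid_V_def\<close>)
  then show ?case by simp
qed

lemma path_exists:
  assumes "v \<in> grid_V n" shows "\<exists>P. is_dpath n P (1,1) v"
proof -
  obtain i j where v: "v = (i,j)" "i \<in> {1,2}" "1 \<le> j" "j \<le> n" using assms unfolding grid_V_def by auto
  have r: "is_dpath n (map (\<lambda>k. (1::nat,k)) [1..<Suc j]) (1,1) (1,j)" using row_path v by auto
  show ?thesis
  proof (cases "i = 1")
    case True then show ?thesis using r v by auto
  next
    case False
    then have "i = 2" using v by auto
    have "is_dpath n (map (\<lambda>k. (1::nat,k)) [1..<Suc j] @ [(2,j)]) (1,1) (2,j)"
      by (rule dpath_snoc[OF r]) (use v in \<open>auto simp: grid_adj_def grid_V_def\<close>)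
    then show ?thesis using v \<open>i = 2\<close> by auto
  qed
qed

lemma rel_height_eq:
  assumes g: "proper3 n \<gamma>" and b: "proper3 n \<beta>" and v: "v \<in> grid_V n"
  shows "rel_height n \<gamma> (1,1) \<beta> v = phi \<beta> v - phi \<gamma> v"
proof -
  have key: "\<And>P. is_dpath n P (1,1) v \<Longrightarrow> path_w \<beta> P - path_w \<gamma> P = phi \<beta> v - phi \<gamma> v"
  proof -
    fix P assume P: "is_dpath n P (1,1) v"
    have "path_w \<beta> P = phi \<beta> v - phi \<beta> (1,1)" "path_w \<gamma> P = phi \<gamma> v - phi \<gamma> (1,1)"
      using path_phi[OF b] path_phi[OF g] P unfolding is_dpath_def by auto
    moreover have "phi \<beta> (1,1) = 0" "phi \<gamma> (1,1) = 0" by (auto simp: phi_def)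
    ultimately show "path_w \<beta> P - path_w \<gamma> P = phi \<beta> v - phi \<gamma> v" by simp
  qed
  obtain P where P: "is_dpath n P (1,1) v" using path_exists[OF v] by blast
  have "\<exists>d P. is_dpath n P (1,1) v \<and> d = path_w \<beta> P - path_w \<gamma> P"
    using P by blast
  then have "\<exists>P. is_dpath n P (1,1) v \<and> rel_height n \<gamma> (1,1) \<beta> v = path_w \<beta> P - path_w \<gamma> P"
    unfolding rel_height_def by (rule someI_ex)
  then show ?thesis using key by auto
qed

lemma even_phi_diff: "even (phi \<beta> v - phi \<gamma> v)"
proof -
  have e: "\<And>a b. even (edge_w \<beta> a b - edge_w \<gamma> a b)" by (simp add: edge_w_def)
  have "phi \<beta> v - phi \<gamma> v = (\<Sum>k\<in>{1..<snd v}. edge_w \<beta> (1,k) (1,Suc k) - edge_w \<gamma> (1,k) (1,Suc k))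
     + (if fst v = 2 then edge_w \<beta> (1, snd v) (2, snd v) - edge_w \<gamma> (1, snd v) (2, snd v) else 0)"
    by (simp add: phi_def sum_subtractf)
  moreover have "even (\<Sum>k\<in>{1..<snd v}. edge_w \<beta> (1,k) (1,Suc k) - edge_w \<gamma> (1,k) (1,Suc k))"
    by (rule dvd_sum) (rule e)
  ultimately show ?thesis using e by simp
qed

lemma adj_diff:
  assumes g: "proper3 n \<gamma>" and b: "proper3 n \<beta>" and a: "grid_adj n x y"
  shows "\<bar>(phi \<beta> y - phi \<gamma> y) - (phi \<beta> x - phi \<gamma> x)\<bar> \<le> 2"
  using edge_phi[OF g a] edge_phi[OF b a] unfolding edge_w_def by (auto split: if_split_asm)


lemma sum_list_nth_int: "sum_list (map g (ys::int list)) = (\<Sum>i\<in>{0..<length ys}. g (ys ! i))"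
  by (simp add: sum_list_sum_nth)

lemma median_list:
  fixes ys :: "int list"
  assumes s: "sorted ys" and l: "length ys = 2*n" and n: "n \<ge> 1"
    and ev: "\<forall>y\<in>set ys. even y"
    and mn: "\<forall>c. even c \<longrightarrow> sum_list (map abs ys) \<le> sum_list (map (\<lambda>y. \<bar>c+y\<bar>) ys)"
    and ivt: "ys!(n-1) < 0 \<Longrightarrow> ys!n > 0 \<Longrightarrow> 0 \<in> set ys"
  shows "ys!(n-1) = 0 \<or> ys!n = 0"
proof (rule ccontr)
  assume na: "\<not> (ys!(n-1) = 0 \<or> ys!n = 0)"
  have evi: "\<And>i. i < 2*n \<Longrightarrow> even (ys!i)" using ev l by (simp add: nth_mem)
  have mono: "\<And>i j. i \<le> j \<Longrightarrow> j < 2*n \<Longrightarrow> ys!i \<le> ys!j" using s l by (simp add: sorted_nth_mono)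
  have A: "sum_list (map abs ys) = (\<Sum>i\<in>{0..<2*n}. \<bar>ys!i\<bar>)" using l by (simp add: sum_list_nth_int)
  have B: "\<And>c. sum_list (map (\<lambda>y. \<bar>c+y\<bar>) ys) = (\<Sum>i\<in>{0..<2*n}. \<bar>c + ys!i\<bar>)"
    using l by (simp add: sum_list_nth_int)
  consider "ys!n < 0" | "ys!(n-1) > 0" | "ys!(n-1) < 0" "ys!n > 0" using na mono[of "n-1" n] n by force
  then show False
  proof cases
    case 1
    define d where "d i = \<bar>2 + ys!i\<bar> - \<bar>ys!i\<bar>" for i
    have d1: "\<And>i. i \<in> {0..<Suc n} \<Longrightarrow> d i = -2"
    proof -
      fix i assume i: "i \<in> {0..<Suc n}"
      then have "ys!i \<le> ys!n" using mono[of i n] n by auto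
      then have "ys!i < 0" using 1 by simp
      moreover have "even (ys!i)" using evi[of i] i n by auto
      ultimately have "ys!i \<le> -2" by presburger
      then show "d i = -2" unfolding d_def by simp
    qed
    have d2: "\<And>i. d i \<le> 2" unfolding d_def by simp
    have "(\<Sum>i\<in>{0..<2*n}. d i) = (\<Sum>i\<in>{0..<Suc n}. d i) + (\<Sum>i\<in>{Suc n..<2*n}. d i)"
      using n by (intro sum.atLeastLessThan_concat[symmetric]) auto
    also have "(\<Sum>i\<in>{0..<Suc n}. d i) = -2 * (int n+1)" using d1 by simp
    also have "(\<Sum>i\<in>{Suc n..<2*n}. d i) \<le> of_nat (card {Suc n..<2*n}) * 2"
      by (rule sum_bounded_above) (rule d2)
    also have "card {Suc n..<2*n} = n - 1" by simp
    finally have "(\<Sum>i\<in>{0..<2*n}. d i) < 0" using n by (simp add: of_nat_diff)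
    then have "(\<Sum>i\<in>{0..<2*n}. \<bar>2 + ys!i\<bar>) < (\<Sum>i\<in>{0..<2*n}. \<bar>ys!i\<bar>)"
      unfolding d_def by (simp add: sum_subtractf)
    then show False using mn[rule_format, of 2] A B[of 2] by simp
  next
    case 2
    define d where "d i = \<bar>-2 + ys!i\<bar> - \<bar>ys!i\<bar>" for i
    have d1: "\<And>i. i \<in> {n-1..<2*n} \<Longrightarrow> d i = -2"
    proof -
      fix i assume i: "i \<in> {n-1..<2*n}"
      then have "ys!(n-1) \<le> ys!i" using mono[of "n-1" i] n by auto
      then have "ys!i > 0" using 2 by simp
      moreover have "even (ys!i)" using evi[of i] i n by auto
      ultimately have "ys!i \<ge> 2" by presburger
      then show "d i = -2" unfolding d_def by simp
    qed
    have d2: "\<And>i. d i \<le> 2" unfolding d_def by simp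
    have "(\<Sum>i\<in>{0..<2*n}. d i) = (\<Sum>i\<in>{0..<n-1}. d i) + (\<Sum>i\<in>{n-1..<2*n}. d i)"
      using n by (intro sum.atLeastLessThan_concat[symmetric]) auto
    also have "(\<Sum>i\<in>{n-1..<2*n}. d i) = -2 * (int n+1)" using d1 n by (simp add: of_nat_diff)
    also have "(\<Sum>i\<in>{0..<n-1}. d i) \<le> of_nat (card {0..<n-1}) * 2"
      by (rule sum_bounded_above) (rule d2)
    also have "card {0..<n-1} = n - 1" by simp
    finally have "(\<Sum>i\<in>{0..<2*n}. d i) < 0" using n by (simp add: of_nat_diff)
    then have "(\<Sum>i\<in>{0..<2*n}. \<bar>-2 + ys!i\<bar>) < (\<Sum>i\<in>{0..<2*n}. \<bar>ys!i\<bar>)"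
      unfolding d_def by (simp add: sum_subtractf)
    then show False using mn[rule_format, of "-2"] A B[of "-2"] by simp
  next
    case 3
    then have "0 \<in> set ys" by (rule ivt)
    then obtain k where k: "k < 2*n" "ys!k = 0" using l by (metis in_set_conv_nth)
    show False
    proof (cases "k \<le> n-1")
      case True
      have "n - 1 < 2*n" using n by simp
      then have "ys!k \<le> ys!(n-1)" using mono[of k "n-1"] True by simp
      then show ?thesis using 3 k by simp
    next
      case False
      then have "n \<le> k" by simp
      then have "ys!n \<le> ys!k" using mono[of n k] k by simp
      then show ?thesis using 3 k by simp
    qed
  qed
qed


lemma sum_to_list:
  assumes "finite V"
  shows "(\<Sum>v\<in>V. g (f v)) = sum_list (map g (sorted_list_of_multiset (image_mset f (mset_set V))))"
proof -
  have "(\<Sum>v\<in>V. g (f v)) = sum_mset (image_mset (\<lambda>v. g (f v)) (mset_set V))"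
    by (rule sum_unfold_sum_mset)
  also have "\<dots> = sum_mset (image_mset g (image_mset f (mset_set V)))" by (simp add: image_mset.compositionality o_def)
  also have "\<dots> = sum_mset (image_mset g (mset (sorted_list_of_multiset (image_mset f (mset_set V)))))" by simp
  also have "\<dots> = sum_list (map g (sorted_list_of_multiset (image_mset f (mset_set V))))"
    by (simp only: mset_map[symmetric] sum_mset_sum_list)
  finally show ?thesis .
qed

lemma sign_const:
  fixes f :: "nat \<times> nat \<Rightarrow> int"
  assumes ev: "\<forall>v\<in>grid_V n. even (f v)"
    and adj: "\<And>a b. grid_adj n a b \<Longrightarrow> \<bar>f b - f a\<bar> \<le> 2"
    and nz: "\<forall>v\<in>grid_V n. f v \<noteq> 0"
    and v: "v \<in> grid_V n"
  shows "f v < 0 \<longleftrightarrow> f (1,1) < 0"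
proof -
  have step: "\<And>a b. grid_adj n a b \<Longrightarrow> (f a < 0 \<longleftrightarrow> f b < 0)"
  proof -
    fix a b assume ab: "grid_adj n a b"
    then have "a \<in> grid_V n" "b \<in> grid_V n" unfolding grid_adj_def by auto
    then have "even (f a)" "even (f b)" "f a \<noteq> 0" "f b \<noteq> 0" using ev nz by auto
    moreover have "\<bar>f b - f a\<bar> \<le> 2" using adj ab .
    ultimately show "f a < 0 \<longleftrightarrow> f b < 0" by presburger
  qed
  have row: "f (1,j) < 0 \<longleftrightarrow> f (1,1) < 0" if "1 \<le> j" "j \<le> n" for j
    using that
  proof (induction j rule: dec_induct)
    case base then show ?case by simp
  next
    case (step m)
    have "grid_adj n (1,m) (1,Suc m)" using step by (auto simp: grid_adj_def grid_V_def)
    then have "f (1,m) < 0 \<longleftrightarrow> f (1,Suc m) < 0" by (rule \<open>\<And>a b. grid_adj n a b \<Longrightarrow> (f a < 0 \<longleftrightarrow> f b < 0)\<close>)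
    moreover have "f (1,m) < 0 \<longleftrightarrow> f (1,1) < 0" using step.IH step.hyps step.prems by simp
    ultimately show ?case by blast
  qed
  obtain i j where vv: "v = (i,j)" "i \<in> {1,2}" "1 \<le> j" "j \<le> n" using v unfolding grid_V_def by auto
  show ?thesis
  proof (cases "i = 1")
    case True then show ?thesis using row[of j] vv by simp
  next
    case False
    then have "grid_adj n (1,j) (2,j)" using vv by (auto simp: grid_adj_def grid_V_def)
    then have "f (1,j) < 0 \<longleftrightarrow> f (2,j) < 0" by (rule step)
    moreover have "i = 2" using vv False by auto
    ultimately show ?thesis using row[of j] vv by simp
  qed
qed

theorem lemma5p7:
  fixes n :: nat and \<gamma> \<beta> :: "nat \<times> nat \<Rightarrow> 3" and H :: int
  assumes "n \<ge> 1"
    and "proper3 n \<gamma>" and "proper3 n \<beta>"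
    and "even H"
    and "\<forall>H'::int. even H' \<longrightarrow>
           (\<Sum>v\<in>grid_V n. \<bar>H + rel_height n \<gamma> (1,1) \<beta> v\<bar>)
             \<le> (\<Sum>v\<in>grid_V n. \<bar>H' + rel_height n \<gamma> (1,1) \<beta> v\<bar>)"
  shows "let ys = sorted_list_of_multiset
                    (image_mset (\<lambda>v. H + rel_height n \<gamma> (1,1) \<beta> v) (mset_set (grid_V n)))
         in ys ! (n - 1) = 0 \<or> ys ! n = 0"
proof -
  define f where "f v = H + rel_height n \<gamma> (1,1) \<beta> v" for v
  define ys where "ys = sorted_list_of_multiset (image_mset f (mset_set (grid_V n)))"
  have fin: "finite (grid_V n)" unfolding grid_V_def by simp
  have card: "card (grid_V n) = 2 * n" unfolding grid_V_def by (simp add: card_cartesian_product)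
  have fe: "\<And>v. v \<in> grid_V n \<Longrightarrow> f v = H + (phi \<beta> v - phi \<gamma> v)"
    unfolding f_def using rel_height_eq[OF assms(2,3)] by simp
  have evf: "\<forall>v\<in>grid_V n. even (f v)" using fe even_phi_diff assms(4) by simp
  have adjf: "\<And>a b. grid_adj n a b \<Longrightarrow> \<bar>f b - f a\<bar> \<le> 2"
  proof -
    fix a b assume ab: "grid_adj n a b"
    then have "a \<in> grid_V n" "b \<in> grid_V n" unfolding grid_adj_def by auto
    then show "\<bar>f b - f a\<bar> \<le> 2" using fe adj_diff[OF assms(2,3) ab] by simp
  qed
  have setys: "set ys = f ` grid_V n" unfolding ys_def using fin by simp
  have sortys: "sorted ys" unfolding ys_def by simp
  have lenys: "length ys = 2 * n"
  proof -
    have "length ys = size (mset ys)" by simp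
    also have "mset ys = image_mset f (mset_set (grid_V n))" unfolding ys_def by simp
    finally show ?thesis using card by simp
  qed
  have S: "\<And>c. (\<Sum>v\<in>grid_V n. \<bar>(H + c) + rel_height n \<gamma> (1,1) \<beta> v\<bar>) = sum_list (map (\<lambda>y. \<bar>c + y\<bar>) ys)"
  proof -
    fix c
    have "(\<Sum>v\<in>grid_V n. \<bar>(H + c) + rel_height n \<gamma> (1,1) \<beta> v\<bar>) = (\<Sum>v\<in>grid_V n. (\<lambda>y. \<bar>c + y\<bar>) (f v))"
      unfolding f_def by (simp add: algebra_simps)
    also have "\<dots> = sum_list (map (\<lambda>y. \<bar>c + y\<bar>) ys)" unfolding ys_def by (rule sum_to_list[OF fin])
    finally show "(\<Sum>v\<in>grid_V n. \<bar>(H + c) + rel_height n \<gamma> (1,1) \<beta> v\<bar>) = sum_list (map (\<lambda>y. \<bar>c + y\<bar>) ys)" .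
  qed
  have mn: "\<forall>c. even c \<longrightarrow> sum_list (map abs ys) \<le> sum_list (map (\<lambda>y. \<bar>c+y\<bar>) ys)"
  proof (intro allI impI)
    fix c :: int assume c: "even c"
    have "even (H + c)" using c assms(4) by simp
    then have "(\<Sum>v\<in>grid_V n. \<bar>H + rel_height n \<gamma> (1,1) \<beta> v\<bar>)
             \<le> (\<Sum>v\<in>grid_V n. \<bar>(H + c) + rel_height n \<gamma> (1,1) \<beta> v\<bar>)" using assms(5) by blast
    moreover have "(\<Sum>v\<in>grid_V n. \<bar>H + rel_height n \<gamma> (1,1) \<beta> v\<bar>) = sum_list (map abs ys)"
      using S[of 0] by simp
    ultimately show "sum_list (map abs ys) \<le> sum_list (map (\<lambda>y. \<bar>c+y\<bar>) ys)" using S[of c] by simp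
  qed
  have evys: "\<forall>y\<in>set ys. even y" using setys evf by auto
  have ivt: "0 \<in> set ys" if h: "ys!(n-1) < 0" "ys!n > 0"
  proof (rule ccontr)
    assume "0 \<notin> set ys"
    then have nz: "\<forall>v\<in>grid_V n. f v \<noteq> 0" using setys by auto
    have "ys!(n-1) \<in> set ys" "ys!n \<in> set ys" using lenys assms(1) by auto
    then obtain u w where uw: "u \<in> grid_V n" "w \<in> grid_V n" "f u = ys!(n-1)" "f w = ys!n"
      using setys by (metis imageE)
    have "f u < 0 \<longleftrightarrow> f (1,1) < 0" by (rule sign_const[OF evf adjf nz uw(1)])
    moreover have "f w < 0 \<longleftrightarrow> f (1,1) < 0" by (rule sign_const[OF evf adjf nz uw(2)])
    ultimately show False using uw(3,4) h by linarith
  qed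
  have res: "ys!(n-1) = 0 \<or> ys!n = 0"
    by (rule median_list[OF sortys lenys assms(1) evys mn ivt])
  have feq: "(\<lambda>v. H + rel_height n \<gamma> (1,1) \<beta> v) = f" by (rule ext) (simp add: f_def)
  show ?thesis unfolding Let_def feq using res unfolding ys_def .
qed

end
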